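(* Let $\sigma\ge 2$, $k\ge 1$, let $U$ be any rotation of a $\sigma$-ary de Bruijn cycle of order $k$, and let $w_{\mathrm{lin}}=U\,U[0..k-2]$, a word of length $\sigma^k+(k-1)$. Then $\operatorname{sre}(w_{\mathrm{lin}})=\sigma^k$.
   Context: A $\sigma$-ary de Bruijn cycle of order $k$ is a cyclic word of length $\sigma^k$ over an alphabet $\Sigma$ of size $\sigma$ in which every word of $\Sigma^k$ occurs exactly once as a cyclic length-$k$ window. Strings are $0$-indexed; $U[0..k-2]$ is empty when $k=1$. For a string $w$, a substring $x$ (possibly empty) is right-maximal if there are distinct $a,b\in\Sigma$ with $xa$ and $xb$ both substrings of $w$; the set of right-extensions is $E_r(w)=\{xa : a\in\Sigma,\ \exists b\ne a \text{ with } xa, xb \text{ substrings of } w\}$. The set of super-maximal extensions is $S_r(w)=\{x\in E_r(w): \text{for all } y\in E_r(w),\ y=zx \Rightarrow z \text{ is empty}\}$, i.e. right-extensions that are not proper suffixes of other right-extensions, and $\operatorname{sre}(w)=|S_r(w)|$. *)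

theory Defs
  imports Main "HOL-Library.Sublist"
begin

definition cwin :: "'a list \<Rightarrow> nat \<Rightarrow> nat \<Rightarrow> 'a list" where
  "cwin V k i = map (\<lambda>j. V ! ((i + j) mod length V)) [0..<k]"

definition de_bruijn :: "'a set \<Rightarrow> nat \<Rightarrow> 'a list \<Rightarrow> bool" where
  "de_bruijn S k V \<longleftrightarrow> length V = card S ^ k \<and> set V \<subseteq> S \<and>
     (\<forall>x. length x = k \<and> set x \<subseteq> S \<longrightarrow> card {i. i < length V \<and> cwin V k i = x} = 1)"

definition right_ext :: "'a set \<Rightarrow> 'a list \<Rightarrow> 'a list set" where
  "right_ext S w = {x @ [a] | x a. a \<in> S \<and>
      (\<exists>b\<in>S. b \<noteq> a \<and> sublist (x @ [a]) w \<and> sublist (x @ [b]) w)}"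

definition super_max_ext :: "'a set \<Rightarrow> 'a list \<Rightarrow> 'a list set" where
  "super_max_ext S w = {x \<in> right_ext S w. \<forall>y \<in> right_ext S w. \<forall>z. y = z @ x \<longrightarrow> z = []}"

definition sre :: "'a set \<Rightarrow> 'a list \<Rightarrow> nat" where
  "sre S w = card (super_max_ext S w)"

end

theory Submission
  imports Defs
begin

lemma sublist_pos:
  "sublist x w \<longleftrightarrow> (\<exists>i. i + length x \<le> length w \<and> x = take (length x) (drop i w))"
proof
  assume "sublist x w"
  then obtain ps ss where "w = ps @ x @ ss" by (auto simp: sublist_def)
  then show "\<exists>i. i + length x \<le> length w \<and> x = take (length x) (drop i w)"
    by (intro exI[of _ "length ps"]) auto
next
  assume "\<exists>i. i + length x \<le> length w \<and> x = take (length x) (drop i w)"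
  then obtain i where i: "i + length x \<le> length w" "x = take (length x) (drop i w)" by blast
  have "w = take i w @ take (length x) (drop i w) @ drop (length x) (drop i w)"
    by (metis append_take_drop_id)
  then show "sublist x w" using i(2) unfolding sublist_def by metis
qed

lemma k_lt_pow: "(k::nat) < \<sigma> ^ k" if "\<sigma> \<ge> 2" for \<sigma>
proof -
  have "k < 2 ^ k" by (rule less_exp)
  also have "2 ^ k \<le> \<sigma> ^ k" using that by (simp add: power_mono)
  finally show ?thesis .
qed

theorem lemma5:
  fixes S :: "'a set" and \<sigma> k r :: nat and V U :: "'a list"
  assumes "finite S" and "card S = \<sigma>" and "\<sigma> \<ge> 2" and "k \<ge> 1"
    and "de_bruijn S k V" and "U = rotate r V"
  shows "sre S (U @ take (k - 1) U) = \<sigma> ^ k"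
proof -
  define N where "N = \<sigma> ^ k"
  define w where "w = U @ take (k - 1) U"
  have lenV: "length V = N" and setV: "set V \<subseteq> S"
    and db: "\<And>x. length x = k \<Longrightarrow> set x \<subseteq> S \<Longrightarrow> card {i. i < length V \<and> cwin V k i = x} = 1"
    using assms(2,5) by (auto simp: de_bruijn_def N_def)
  have kN: "k < N" using k_lt_pow[OF assms(3)] by (simp add: N_def)
  have lenU: "length U = N" using assms(6) lenV by simp
  have lenw: "length w = N + k - 1" using lenU kN assms(4) by (simp add: w_def)
  have setw: "set w \<subseteq> S"
    using assms(6) setV set_take_subset[of "k - 1" U] by (auto simp: w_def)
  have wnth: "w ! q = V ! ((r + q) mod N)" if "q < N + k - 1" for q
  proof (cases "q < N")
    case True
    then show ?thesis using nth_rotate[of q V r] lenU lenV assms(6)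
      by (simp add: w_def nth_append)
  next
    case False
    then have q1: "q - N < k - 1" "q - N < N" using that kN by auto
    have "w ! q = U ! (q - N)" using False q1 lenU by (simp add: w_def nth_append)
    also have "\<dots> = V ! ((r + (q - N)) mod N)" using nth_rotate[of "q - N" V r] q1 lenV assms(6)
      by simp
    also have "(r + (q - N)) mod N = (r + q) mod N"
    proof -
      have "r + q = (r + (q - N)) + N" using False by simp
      then show ?thesis by (metis mod_add_self2)
    qed
    finally show ?thesis .
  qed
  define win where "win i = take k (drop i w)" for i
  define L where "L = {x. set x \<subseteq> S \<and> length x = k}"
  have cardL: "card L = N" unfolding L_def N_def
    using card_lists_length_eq[OF assms(1)] assms(2) by simp
  have A: "\<exists>i<N. win i = x" if "x \<in> L" for x
  proof -
    have "card {i. i < length V \<and> cwin V k i = x} = 1" using that db by (auto simp: L_def)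
    then obtain i where i: "i < N" "cwin V k i = x"
      using lenV by (metis (mono_tags, lifting) card.empty empty_Collect_eq zero_neq_one)
    define p where "p = (i + (N - r mod N)) mod N"
    have pN: "p < N" using kN by (simp add: p_def)
    have rp: "(r + p + j) mod N = (i + j) mod N" for j
    proof -
      have "(r + p + j) mod N = (r + (i + (N - r mod N)) + j) mod N"
        unfolding p_def by (metis mod_add_left_eq mod_add_right_eq)
      also have "\<dots> = (r mod N + (i + (N - r mod N)) + j) mod N"
        by (metis mod_add_left_eq)
      also have "r mod N + (i + (N - r mod N)) + j = (i + j) + N"
        using kN mod_less_divisor[of N r] by linarith
      finally show ?thesis by simp
    qed
    have "win p = x"
    proof (rule nth_equalityI)
      show "length (win p) = length x"
        using i pN lenw that by (auto simp: win_def L_def)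
      fix j assume "j < length (win p)"
      then have j: "j < k" by (simp add: win_def)
      have "win p ! j = w ! (p + j)" using j pN lenw by (simp add: win_def)
      also have "\<dots> = V ! ((r + (p + j)) mod N)" using wnth pN j by simp
      also have "\<dots> = V ! ((i + j) mod N)" using rp[of j] by (simp add: add.assoc)
      also have "\<dots> = x ! j" using i(2) j lenV unfolding cwin_def by force
      finally show "win p ! j = x ! j" .
    qed
    then show ?thesis using pN by blast
  qed
  have imgsub: "win ` {..<N} \<subseteq> L"
  proof
    fix y assume "y \<in> win ` {..<N}"
    then obtain i where "i < N" "y = win i" by auto
    then show "y \<in> L" using lenw setw
      by (auto simp: win_def L_def dest!: in_set_takeD in_set_dropD)
  qed
  have img: "win ` {..<N} = L" using imgsub A by blast
  have inj: "inj_on win {..<N}"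
    by (rule eq_card_imp_inj_on) (simp_all add: img cardL)
  define R where "R = {y. set y \<subseteq> S \<and> 1 \<le> length y \<and> length y \<le> k}"
  have subL: "sublist x w" if "x \<in> L" for x
    using A[OF that] unfolding win_def by (metis sublist_drop sublist_take sublist_order.order.trans)
  have subR: "sublist y w" if "y \<in> R" for y
  proof -
    obtain c where c: "c \<in> S" using assms(2,3) by fastforce
    have "y @ replicate (k - length y) c \<in> L" using that c by (auto simp: R_def L_def)
    then have "sublist (y @ replicate (k - length y) c) w" by (rule subL)
    then show ?thesis by (metis sublist_append_rightI sublist_order.order.trans)
  qed
  have RE: "right_ext S w = R"
  proof
    show "right_ext S w \<subseteq> R"
    proof
      fix y assume "y \<in> right_ext S w"
      then obtain x a b where y: "y = x @ [a]" "a \<in> S" "b \<in> S" "b \<noteq> a"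
        "sublist (x @ [a]) w" "sublist (x @ [b]) w"
        by (auto simp: right_ext_def)
      have sety: "set y \<subseteq> S" using y(1,5) setw
        by (metis set_mono_sublist subset_trans)
      have "length x < k"
      proof (rule ccontr)
        assume "\<not> length x < k"
        then have xk: "k \<le> length x" by simp
        obtain i where i: "i + length (x @ [a]) \<le> length w" "x @ [a] = take (length (x @ [a])) (drop i w)"
          using y(5) sublist_pos by blast
        obtain j where j: "j + length (x @ [b]) \<le> length w" "x @ [b] = take (length (x @ [b])) (drop j w)"
          using y(6) sublist_pos by blast
        have iN: "i < N" and jN: "j < N" using i(1) j(1) xk lenw by auto
        have "win i = take k (x @ [a])" using i(2) xk unfolding win_def
          by (metis length_append_singleton min.absorb1 le_SucI take_take)
        also have "\<dots> = take k x" using xk by simp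
        also have "\<dots> = take k (x @ [b])" using xk by simp
        also have "\<dots> = win j" using j(2) xk unfolding win_def
          by (metis length_append_singleton min.absorb1 le_SucI take_take)
        finally have "i = j" using inj iN jN by (auto dest: inj_onD)
        then have "x @ [a] = x @ [b]" using i(2) j(2) by simp
        then show False using y(4) by simp
      qed
      then show "y \<in> R" using sety y(1) by (auto simp: R_def)
    qed
  next
    show "R \<subseteq> right_ext S w"
    proof
      fix y assume yR: "y \<in> R"
      then have "y \<noteq> []" by (auto simp: R_def)
      then obtain x a where y: "y = x @ [a]" by (metis rev_exhaust)
      have aS: "a \<in> S" using yR y by (auto simp: R_def)
      obtain b where b: "b \<in> S" "b \<noteq> a"
      proof -
        have "card (S - {a}) \<ge> 1" using assms(1,2,3) aS by simp
        then have "S - {a} \<noteq> {}" by (metis card.empty not_one_le_zero)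
        then show ?thesis using that by blast
      qed
      have "x @ [b] \<in> R" using yR y b by (auto simp: R_def)
      then have "sublist (x @ [b]) w" by (rule subR)
      moreover have "sublist (x @ [a]) w" using subR yR y by simp
      ultimately show "y \<in> right_ext S w" using y aS b unfolding right_ext_def by blast
    qed
  qed
  have SM: "super_max_ext S w = L"
  proof
    show "super_max_ext S w \<subseteq> L"
    proof
      fix x assume x: "x \<in> super_max_ext S w"
      then have xR: "x \<in> R" and mx: "\<forall>y\<in>R. \<forall>z. y = z @ x \<longrightarrow> z = []"
        by (auto simp: super_max_ext_def RE)
      obtain c where c: "c \<in> S" using assms(2,3) by fastforce
      have "length x = k"
      proof (rule ccontr)
        assume "length x \<noteq> k"
        then have "c # x \<in> R" using xR c by (auto simp: R_def)
        then show False using mx by fastforce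
      qed
      then show "x \<in> L" using xR by (auto simp: R_def L_def)
    qed
  next
    show "L \<subseteq> super_max_ext S w"
    proof
      fix x assume x: "x \<in> L"
      then have xR: "x \<in> R" using assms(4) by (auto simp: R_def L_def)
      have "\<forall>y\<in>R. \<forall>z. y = z @ x \<longrightarrow> z = []"
        using x by (auto simp: R_def L_def)
      then show "x \<in> super_max_ext S w" using xR by (auto simp: super_max_ext_def RE)
    qed
  qed
  show ?thesis unfolding sre_def w_def[symmetric] SM cardL N_def ..
qed

end
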